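(* Let $A$ be an $m\times n$ matrix with $m\ge n$ such that every square submatrix of $A$ is nonsingular. Then $A$ has rank $n$ and $A$ is completely unsparsifiable, i.e. $\operatorname{nnz}(AX)\ge (m-n+1)n$ for every invertible $n\times n$ matrix $X$. Moreover, the $(n+m)\times n$ matrix $\begin{pmatrix} I_n\\ A\end{pmatrix}$ (the $n\times n$ identity stacked above $A$) is optimally sparse.
   Context: $\operatorname{nnz}(M)$ is the number of nonzero entries of $M$. A matrix $M$ with $k$ columns is optimally sparse if $\operatorname{nnz}(MX)\ge\operatorname{nnz}(M)$ for every invertible $k\times k$ matrix $X$. A square submatrix of $A$ is $A(R,C)$ for row set $R$ and column set $C$ with $|R|=|C|\ge 1$. *)

theory Defs
  imports "Jordan_Normal_Form.DL_Rank" "Jordan_Normal_Form.DL_Submatrix"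
begin

definition nnz :: "'a :: zero mat \<Rightarrow> nat" where
  "nnz M = card {(i, j). i < dim_row M \<and> j < dim_col M \<and> M $$ (i, j) \<noteq> 0}"

definition optimally_sparse :: "'a :: field mat \<Rightarrow> bool" where
  "optimally_sparse M \<longleftrightarrow>
     (\<forall>X \<in> carrier_mat (dim_col M) (dim_col M). invertible_mat X \<longrightarrow> nnz (M * X) \<ge> nnz M)"

definition all_square_submatrices_nonsingular :: "'a :: field mat \<Rightarrow> bool" where
  "all_square_submatrices_nonsingular A \<longleftrightarrow>
     (\<forall>R C. R \<subseteq> {..<dim_row A} \<longrightarrow> C \<subseteq> {..<dim_col A} \<longrightarrow> card R = card C \<longrightarrow> card R \<ge> 1
        \<longrightarrow> det (submatrix A R C) \<noteq> 0)"

end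

theory Submission
  imports Defs
begin

lemma pick_bij: assumes "finite S" shows "bij_betw (pick S) {..<card S} S"
proof -
  have inj: "inj_on (pick S) {..<card S}"
    unfolding inj_on_def by (metis lessThan_iff nat_neq_iff pick_mono)
  have sub: "pick S ` {..<card S} \<subseteq> S" using pick_in_set by auto
  have "card (pick S ` {..<card S}) = card S" using card_image[OF inj] by simp
  hence "pick S ` {..<card S} = S" using card_subset_eq[OF assms sub] by simp
  thus ?thesis using inj by (simp add: bij_betw_def)
qed

lemma key:
  fixes A :: "'a::field mat"
  assumes A: "A \<in> carrier_mat m n" and ns: "all_square_submatrices_nonsingular A"
  and x: "x \<in> carrier_vec n" and x0: "x \<noteq> 0\<^sub>v n"
  shows "card {i. i<m \<and> (A *\<^sub>v x) $ i = 0} < card {j. j<n \<and> x $ j \<noteq> 0}"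
proof (rule ccontr)
  define S where "S = {j. j<n \<and> x $ j \<noteq> 0}"
  define Z where "Z = {i. i<m \<and> (A *\<^sub>v x) $ i = 0}"
  assume "\<not> card {i. i<m \<and> (A *\<^sub>v x) $ i = 0} < card {j. j<n \<and> x $ j \<noteq> 0}"
  hence "card S \<le> card Z" unfolding S_def Z_def by simp
  then obtain R where R: "R \<subseteq> Z" "card R = card S" "finite R"
    by (meson obtain_subset_with_card_n)
  have finS: "finite S" unfolding S_def by simp
  have "\<exists>j<n. x $ j \<noteq> 0"
  proof (rule ccontr)
    assume "\<not> (\<exists>j<n. x $ j \<noteq> 0)"
    hence "x = 0\<^sub>v n" using x by (intro eq_vecI) auto
    thus False using x0 by simp
  qed
  then obtain j0 where j0: "j0 < n" "x $ j0 \<noteq> 0" by blast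
  hence "j0 \<in> S" unfolding S_def by simp
  hence "card S \<noteq> 0" using finS by auto
  hence S1: "card S \<ge> 1" by simp
  let ?k = "card S"
  have RS: "R \<subseteq> {..<dim_row A}" "S \<subseteq> {..<dim_col A}" using R(1) A unfolding Z_def S_def by auto
  have c1: "{i. i<dim_row A \<and> i\<in>R} = R" using RS by auto
  have c2: "{i. i<dim_col A \<and> i\<in>S} = S" using RS by auto
  define B where "B = submatrix A R S"
  have dr: "dim_row B = ?k" unfolding B_def dim_submatrix(1) c1 R(2) by (rule refl)
  have dc: "dim_col B = ?k" unfolding B_def dim_submatrix(2) c2 by (rule refl)
  have B: "B \<in> carrier_mat ?k ?k" using dr dc by (rule carrier_matI)
  have "det B \<noteq> 0" unfolding B_def
    using ns[unfolded all_square_submatrices_nonsingular_def, rule_format, OF RS(1) RS(2) R(2)] S1 R(2) by simp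
  define y where "y = vec ?k (\<lambda>j. x $ pick S j)"
  have y: "y \<in> carrier_vec ?k" unfolding y_def by simp
  have "pick S 0 \<in> S" by (rule pick_in_set) (use S1 in simp)
  hence "y $ 0 \<noteq> 0" using S1 unfolding y_def S_def by simp
  hence y0: "y \<noteq> 0\<^sub>v ?k" using S1 by auto
  have "B *\<^sub>v y = 0\<^sub>v ?k"
  proof (rule eq_vecI)
    fix i assume "i < dim_vec (0\<^sub>v ?k)"
    hence i: "i < ?k" by simp
    hence iR: "i < card R" using R by simp
    have pR: "pick R i \<in> R" using pick_in_set iR by simp
    have "(B *\<^sub>v y) $ i = (\<Sum>j<?k. A $$ (pick R i, pick S j) * x $ pick S j)"
      using i B unfolding mult_mat_vec_def scalar_prod_def y_def
      by (auto simp: B_def submatrix_index c1 c2 R(2) intro!: sum.cong)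
    also have "\<dots> = (\<Sum>l\<in>S. A $$ (pick R i, l) * x $ l)"
      using sum.reindex_bij_betw[OF pick_bij[OF finS], of "\<lambda>l. A $$ (pick R i, l) * x $ l"] by simp
    also have "\<dots> = (\<Sum>l\<in>{0..<n}. A $$ (pick R i, l) * x $ l)"
      by (rule sum.mono_neutral_left) (auto simp: S_def)
    also have "\<dots> = (A *\<^sub>v x) $ pick R i"
      using A x pR R(1) unfolding Z_def mult_mat_vec_def scalar_prod_def by auto
    also have "\<dots> = 0" using pR R(1) unfolding Z_def by auto
    finally show "(B *\<^sub>v y) $ i = 0\<^sub>v ?k $ i" using i by simp
  qed (use B in simp)
  thus False using det_0_iff_vec_prod_zero_field[OF B] y y0 \<open>det B \<noteq> 0\<close> by auto
qed

definition vnz :: "'a::zero vec \<Rightarrow> nat" where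
  "vnz v = card {i. i < dim_vec v \<and> v $ i \<noteq> 0}"

lemma nnz_cols: "nnz M = (\<Sum>j<dim_col M. vnz (col M j))"
proof -
  have eq: "{(i, j). i < dim_row M \<and> j < dim_col M \<and> M $$ (i, j) \<noteq> 0}
     = (\<Union>j\<in>{..<dim_col M}. (\<lambda>i. (i,j)) ` {i. i < dim_row M \<and> M $$ (i, j) \<noteq> 0})" by auto
  have "card (\<Union>j\<in>{..<dim_col M}. (\<lambda>i. (i,j)) ` {i. i < dim_row M \<and> M $$ (i, j) \<noteq> 0})
     = (\<Sum>j<dim_col M. card ((\<lambda>i. (i,j)) ` {i. i < dim_row M \<and> M $$ (i, j) \<noteq> 0}))"
    by (rule card_UN_disjoint) auto
  also have "\<dots> = (\<Sum>j<dim_col M. vnz (col M j))"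
    proof (rule sum.cong)
    fix j assume j: "j \<in> {..<dim_col M}"
    have "{i. i < dim_row M \<and> M $$ (i, j) \<noteq> 0} = {i. i < dim_vec (col M j) \<and> col M j $ i \<noteq> 0}"
      using j by (intro Collect_cong) (auto simp: index_col)
    thus "card ((\<lambda>i. (i,j)) ` {i. i < dim_row M \<and> M $$ (i, j) \<noteq> 0}) = vnz (col M j)"
      unfolding vnz_def by (simp add: card_image inj_on_def)
  qed simp
  finally show ?thesis unfolding nnz_def eq .
qed

lemma card_split: fixes a b :: nat shows "card {i. i < a + b \<and> P i} = card {i. i < a \<and> P i} + card {i. i < b \<and> P (i + a)}"
proof -
  have eq: "{i. i < a + b \<and> P i} = {i. i < a \<and> P i} \<union> (\<lambda>i. i + a) ` {i. i < b \<and> P (i + a)}"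
    (is "?L = ?R")
  proof (rule equalityI; rule subsetI)
    fix i assume "i \<in> ?L"
    hence i: "i < a + b" "P i" by auto
    show "i \<in> ?R"
    proof (cases "i < a")
      case True thus ?thesis using i by simp
    next
      case False
      hence e: "i = (i - a) + a" and "i - a < b" using i by auto
      hence "i - a \<in> {i. i < b \<and> P (i + a)}" using i(2) by simp
      hence "(i - a) + a \<in> (\<lambda>i. i + a) ` {i. i < b \<and> P (i + a)}" by (rule imageI)
      thus ?thesis using e by simp
    qed
  next
    fix i assume "i \<in> ?R"
    thus "i \<in> ?L" by auto
  qed
  have "card ({i. i < a \<and> P i} \<union> (\<lambda>i. i + a) ` {i. i < b \<and> P (i + a)})
     = card {i. i < a \<and> P i} + card ((\<lambda>i. i + a) ` {i. i < b \<and> P (i + a)})"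
    by (rule card_Un_disjoint) auto
  also have "card ((\<lambda>i. i + a) ` {i. i < b \<and> P (i + a)}) = card {i. i < b \<and> P (i + a)}"
    by (rule card_image) (auto simp: inj_on_def)
  finally show ?thesis unfolding eq .
qed

lemma vnz_append: "vnz (u @\<^sub>v w) = vnz u + vnz w"
proof -
  have 1: "{i. i < dim_vec u \<and> (u @\<^sub>v w) $ i \<noteq> 0} = {i. i < dim_vec u \<and> u $ i \<noteq> 0}"
    by (auto simp: index_append_vec)
  have 2: "{i. i < dim_vec w \<and> (u @\<^sub>v w) $ (i + dim_vec u) \<noteq> 0} = {i. i < dim_vec w \<and> w $ i \<noteq> 0}"
    by (auto simp: index_append_vec)
  show ?thesis
    unfolding vnz_def using card_split[of "dim_vec u" "dim_vec w" "\<lambda>i. (u @\<^sub>v w) $ i \<noteq> 0"]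
    unfolding 1 2 by simp
qed

lemma vnz_le: "vnz v \<le> dim_vec v"
proof -
  have "{i. i < dim_vec v \<and> v $ i \<noteq> 0} \<subseteq> {..<dim_vec v}" by auto
  from card_mono[OF _ this] show ?thesis unfolding vnz_def by simp
qed

lemma vnz_prod:
  fixes A :: "'a::field mat"
  assumes A: "A \<in> carrier_mat m n" and ns: "all_square_submatrices_nonsingular A"
  and x: "x \<in> carrier_vec n" and x0: "x \<noteq> 0\<^sub>v n"
  shows "vnz (A *\<^sub>v x) + vnz x \<ge> m + 1"
proof -
  have arith: "\<And>a b z s. a = m - z \<Longrightarrow> z \<le> m \<Longrightarrow> b = s \<Longrightarrow> z < s \<Longrightarrow> m + 1 \<le> a + b"
    by linarith
  have "{i. i<m \<and> (A *\<^sub>v x) $ i \<noteq> 0} = {..<m} - {i. i<m \<and> (A *\<^sub>v x) $ i = 0}" by auto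
  hence "vnz (A *\<^sub>v x) = m - card {i. i<m \<and> (A *\<^sub>v x) $ i = 0}"
    unfolding vnz_def using A card_Diff_subset[of "{i. i<m \<and> (A *\<^sub>v x) $ i = 0}" "{..<m}"]
    by (simp add: subset_iff)
  moreover have "card {i. i<m \<and> (A *\<^sub>v x) $ i = 0} \<le> m"
    using card_mono[of "{..<m}" "{i. i<m \<and> (A *\<^sub>v x) $ i = 0}"] by auto
  moreover have "vnz x = card {j. j<n \<and> x $ j \<noteq> 0}" unfolding vnz_def using x by simp
  moreover note k = key[OF assms]
  ultimately show ?thesis by (rule arith)
qed

lemma kernel_trivial:
  fixes A :: "'a::field mat"
  assumes A: "A \<in> carrier_mat m n" and ns: "all_square_submatrices_nonsingular A" and mn: "m \<ge> n"
  and x: "x \<in> carrier_vec n" and z: "A *\<^sub>v x = 0\<^sub>v m"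
  shows "x = 0\<^sub>v n"
proof (rule ccontr)
  assume "x \<noteq> 0\<^sub>v n"
  from vnz_prod[OF A ns x this] have "vnz (A *\<^sub>v x) + vnz x \<ge> m + 1" .
  moreover have "vnz (A *\<^sub>v x) = 0" unfolding z vnz_def by simp
  moreover have "vnz x \<le> n" using vnz_le[of x] x by simp
  ultimately have "m + 1 \<le> n" by linarith
  thus False using mn by linarith
qed

lemma inv_col_nz:
  assumes X: "X \<in> carrier_mat n n" and inv: "invertible_mat X" and j: "j < n"
  shows "col X j \<noteq> 0\<^sub>v n"
proof
  assume c: "col X j = 0\<^sub>v n"
  obtain B where XB: "X * B = 1\<^sub>m n" and BX: "B * X = 1\<^sub>m (dim_row B)"
    using inv X unfolding invertible_mat_def inverts_mat_def by auto
  have "dim_col (B * X) = n" using X by simp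
  hence r: "dim_row B = n" unfolding BX by simp
  have "dim_col (X * B) = n" unfolding XB by simp
  hence "dim_col B = n" by simp
  hence B: "B \<in> carrier_mat n n" using r by auto
  have "col (B * X) j = B *\<^sub>v col X j" using col_mult2[OF B X j] .
  also have "\<dots> = 0\<^sub>v n" unfolding c using B
    by (intro eq_vecI) (auto simp: mult_mat_vec_def scalar_prod_def)
  finally have "col (B * X) j = 0\<^sub>v n" .
  hence "col (1\<^sub>m n :: 'a mat) j = 0\<^sub>v n" unfolding BX r .
  hence "col (1\<^sub>m n) j $ j = (0::'a)" using j by simp
  thus False using j by simp
qed

lemma vnz_unit: "vnz (unit_vec n j :: 'a::zero_neq_one vec) \<le> 1"
proof -
  have "{i. i < dim_vec (unit_vec n j :: 'a vec) \<and> unit_vec n j $ i \<noteq> (0::'a)} \<subseteq> {j}"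
    by (auto simp: unit_vec_def split: if_splits)
  from card_mono[OF _ this] show ?thesis unfolding vnz_def by simp
qed

theorem mainTheorem4:
  fixes A :: "'a :: field mat" and m n :: nat
  assumes "A \<in> carrier_mat m n"
    and "m \<ge> n"
    and "all_square_submatrices_nonsingular A"
  shows "vec_space.rank m A = n
         \<and> (\<forall>X \<in> carrier_mat n n. invertible_mat X \<longrightarrow> nnz (A * X) \<ge> (m - n + 1) * n)
         \<and> optimally_sparse (1\<^sub>m n @\<^sub>r A)"
proof (intro conjI)
  note A = assms(1) and mn = assms(2) and ns = assms(3)
  note kt = kernel_trivial[OF A ns mn]
  interpret V: vec_space "TYPE('a)" m .
  have dist: "distinct (cols A)"
  proof (rule ccontr)
    assume "\<not> distinct (cols A)"
    then obtain i j where ij: "i\<noteq>j" "cols A ! i = cols A ! j" "i<length (cols A)" "j<length (cols A)"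
      using distinct_conv_nth by blast
    hence cij: "col A i = col A j" "i<n" "j<n" using A by auto
    define v :: "'a vec" where "v = vec n (\<lambda>k. (if k = i then 1 else 0) - (if k = j then 1 else 0))"
    have v: "v \<in> carrier_vec n" unfolding v_def by simp
    have "A *\<^sub>v v = 0\<^sub>v m"
    proof (rule eq_vecI)
      fix r assume "r < dim_vec (0\<^sub>v m)"
      hence r: "r < m" by simp
      have "(A *\<^sub>v v) $ r = (\<Sum>k\<in>{0..<n}. A $$ (r, k) * v $ k)"
        using A r v unfolding mult_mat_vec_def scalar_prod_def by auto
      also have "\<dots> = (\<Sum>k\<in>{0..<n}. (if k = i then A $$ (r, k) else 0)) - (\<Sum>k\<in>{0..<n}. (if k = j then A $$ (r, k) else 0))"
        unfolding sum_subtractf[symmetric] by (rule sum.cong) (auto simp: v_def)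
      also have "\<dots> = A $$ (r, i) - A $$ (r, j)" using cij by simp
      also have "\<dots> = col A i $ r - col A j $ r" using A r cij(2,3) by simp
      also have "\<dots> = 0" using cij by simp
      finally show "(A *\<^sub>v v) $ r = 0\<^sub>v m $ r" using r by simp
    qed (use A in simp)
    hence "v = 0\<^sub>v n" using kt v by blast
    hence "v $ i = 0" using cij by simp
    thus False using cij ij(1) unfolding v_def by simp
  qed
  have li: "\<not> V.lin_dep (set (cols A))"
  proof
    assume "V.lin_dep (set (cols A))"
    then obtain v where "v \<in> carrier_vec n" "v \<noteq> 0\<^sub>v n" "A *\<^sub>v v = 0\<^sub>v m"
      using V.lin_depE[OF A _ dist] by blast
    thus False using kt by blast
  qed
  show "vec_space.rank m A = n" using V.lin_indpt_full_rank[OF A dist li] .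
  show "\<forall>X \<in> carrier_mat n n. invertible_mat X \<longrightarrow> nnz (A * X) \<ge> (m - n + 1) * n"
  proof (intro ballI impI)
    fix X :: "'a mat" assume X: "X \<in> carrier_mat n n" and inv: "invertible_mat X"
    have AX: "A * X \<in> carrier_mat m n" using A X by simp
    have "\<And>j. j \<in> {..<n} \<Longrightarrow> m - n + 1 \<le> vnz (col (A * X) j)"
    proof -
      fix j assume "j \<in> {..<n}"
      hence j: "j < n" by simp
      have x: "col X j \<in> carrier_vec n" using X unfolding carrier_vec_def by simp
      have e: "col (A * X) j = A *\<^sub>v col X j" using col_mult2[OF A X j] .
      have "vnz (A *\<^sub>v col X j) + vnz (col X j) \<ge> m + 1"
        using vnz_prod[OF A ns x inv_col_nz[OF X inv j]] .
      moreover have "vnz (col X j) \<le> n" using vnz_le[of "col X j"] X by simp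
      ultimately show "m - n + 1 \<le> vnz (col (A * X) j)" unfolding e using mn by linarith
    qed
    hence "of_nat (card {..<n}) * (m - n + 1) \<le> (\<Sum>j\<in>{..<n}. vnz (col (A * X) j))"
      by (rule sum_bounded_below)
    hence "n * (m - n + 1) \<le> (\<Sum>j<n. vnz (col (A * X) j))" by simp
    thus "nnz (A * X) \<ge> (m - n + 1) * n" unfolding nnz_cols using AX X by (simp add: mult.commute)
  qed
  let ?B = "1\<^sub>m n @\<^sub>r A"
  have B: "?B \<in> carrier_mat (n + m) n" using A by auto
  show "optimally_sparse ?B"
    unfolding optimally_sparse_def
  proof (intro ballI impI)
    fix X :: "'a mat" assume X0: "X \<in> carrier_mat (dim_col ?B) (dim_col ?B)" and inv: "invertible_mat X"
    have X: "X \<in> carrier_mat n n" using X0 B by simp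
    have BX: "?B * X \<in> carrier_mat (n + m) n" using B X by simp
    have "\<And>j. j \<in> {..<n} \<Longrightarrow> vnz (col ?B j) \<le> m + 1"
    proof -
      fix j assume "j \<in> {..<n}"
      hence j: "j < n" by simp
      have "col ?B j = col (?B * 1\<^sub>m n) j" using B by simp
      also have "\<dots> = ?B *\<^sub>v unit_vec n j" using col_mult2[OF B one_carrier_mat j] j by simp
      also have "\<dots> = (1\<^sub>m n *\<^sub>v unit_vec n j) @\<^sub>v (A *\<^sub>v unit_vec n j)"
        by (rule mat_mult_append[OF one_carrier_mat A]) simp
      also have "\<dots> = unit_vec n j @\<^sub>v (A *\<^sub>v unit_vec n j)" by simp
      finally have e: "col ?B j = unit_vec n j @\<^sub>v (A *\<^sub>v unit_vec n j)" .
      have "vnz (A *\<^sub>v unit_vec n j) \<le> m" using vnz_le[of "A *\<^sub>v unit_vec n j"] A by simp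
      thus "vnz (col ?B j) \<le> m + 1" unfolding e vnz_append using vnz_unit[of n j, where 'a='a] by linarith
    qed
    hence "(\<Sum>j\<in>{..<n}. vnz (col ?B j)) \<le> of_nat (card {..<n}) * (m + 1)"
      by (rule sum_bounded_above)
    hence 1: "(\<Sum>j<n. vnz (col ?B j)) \<le> n * (m + 1)" by simp
    have "\<And>j. j \<in> {..<n} \<Longrightarrow> m + 1 \<le> vnz (col (?B * X) j)"
    proof -
      fix j assume "j \<in> {..<n}"
      hence j: "j < n" by simp
      have x: "col X j \<in> carrier_vec n" using X unfolding carrier_vec_def by simp
      have "col (?B * X) j = ?B *\<^sub>v col X j" using col_mult2[OF B X j] .
      also have "\<dots> = (1\<^sub>m n *\<^sub>v col X j) @\<^sub>v (A *\<^sub>v col X j)"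
        by (rule mat_mult_append[OF one_carrier_mat A x])
      also have "\<dots> = col X j @\<^sub>v (A *\<^sub>v col X j)" using x by simp
      finally have e: "col (?B * X) j = col X j @\<^sub>v (A *\<^sub>v col X j)" .
      have "vnz (A *\<^sub>v col X j) + vnz (col X j) \<ge> m + 1"
        using vnz_prod[OF A ns x inv_col_nz[OF X inv j]] .
      thus "m + 1 \<le> vnz (col (?B * X) j)" unfolding e vnz_append by linarith
    qed
    hence "of_nat (card {..<n}) * (m + 1) \<le> (\<Sum>j\<in>{..<n}. vnz (col (?B * X) j))"
      by (rule sum_bounded_below)
    hence 2: "n * (m + 1) \<le> (\<Sum>j<n. vnz (col (?B * X) j))" by simp
    show "nnz ?B \<le> nnz (?B * X)" unfolding nnz_cols using 1 2 B BX X by simp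
  qed
qed

end
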